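(* For each $n$ let $r_\star=r_\star(n)$ be an integer maximising $q_n^r$ over $r$. Then: (i) if $r$ is an integer with $r=r_\star+c\sqrt n$ for some $c\in[-\sqrt{\log n},\sqrt{\log n}]$, then \[ q_n^r = \exp\!\left(-\frac{5\sqrt5\,c^2}{2}+o(1)\right) q_n^{r_\star}, \] where $o(1)\to 0$ as $n\to\infty$; (ii) the number of sets $A\in Q(P_n)$ with $\big||A|-r_\star\big|>\sqrt{n\log n}$ is \[ O\!\left(n\exp\!\left(-\frac{5\sqrt5}{2}\log n\right) q_n^{r_\star}\right)=o\big(q_n^{r_\star}\big). \]
   Context: $Q(P_n)$ is the family of subsets of $[n]=\{1,\dots,n\}$ containing no two consecutive integers, $Q^{(r)}(P_n)$ its members of size $r$, and $q_n^r=|Q^{(r)}(P_n)|$. *)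

theory Defs
  imports Complex_Main "HOL-Library.Landau_Symbols"
begin

definition QP :: "nat \<Rightarrow> nat set set" where
  "QP n = {A. A \<subseteq> {1..n} \<and> (\<forall>i\<in>A. Suc i \<notin> A)}"

definition qnr :: "nat \<Rightarrow> int \<Rightarrow> nat" where
  "qnr n r = card {A \<in> QP n. int (card A) = r}"

end

theory Submission
  imports Defs "HOL-Real_Asymp.Real_Asymp"
begin



lemma QP_fin: "A \<in> QP n \<Longrightarrow> finite A"
  unfolding QP_def by (auto intro: finite_subset)

lemma QP_card0: "{A \<in> QP n. card A = 0} = {{}}"
  using QP_fin by (auto simp: QP_def)

lemma QP_0: "QP 0 = {{}}" by (auto simp: QP_def)
lemma QP_1: "QP (Suc 0) = {{}, {1}}"
  unfolding QP_def by (auto simp: subset_iff)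

lemma QP_split:
  "{A \<in> QP (Suc (Suc n)). card A = Suc k} =
   {A \<in> QP (Suc n). card A = Suc k} \<union> insert (Suc (Suc n)) ` {B \<in> QP n. card B = k}"
proof (intro equalityI subsetI)
  fix A assume A: "A \<in> {A \<in> QP (Suc (Suc n)). card A = Suc k}"
  then have fin: "finite A" using QP_fin by blast
  show "A \<in> {A \<in> QP (Suc n). card A = Suc k} \<union> insert (Suc (Suc n)) ` {B \<in> QP n. card B = k}"
  proof (cases "Suc (Suc n) \<in> A")
    case False
    then have "A \<in> QP (Suc n)" using A by (auto simp: QP_def subset_iff le_Suc_eq)
    then show ?thesis using A by auto
  next
    case True
    then have n1: "Suc n \<notin> A" using A by (auto simp: QP_def)
    define B where "B = A - {Suc (Suc n)}"
    have "B \<in> QP n" using A n1 True unfolding B_def QP_def by (auto simp: subset_iff le_Suc_eq)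
    moreover have "card B = k" using A True fin unfolding B_def by auto
    moreover have "A = insert (Suc (Suc n)) B" using True B_def by auto
    ultimately show ?thesis by auto
  qed
next
  fix A assume A: "A \<in> {A \<in> QP (Suc n). card A = Suc k} \<union> insert (Suc (Suc n)) ` {B \<in> QP n. card B = k}"
  show "A \<in> {A \<in> QP (Suc (Suc n)). card A = Suc k}"
  proof (cases "A \<in> {A \<in> QP (Suc n). card A = Suc k}")
    case True then show ?thesis by (auto simp: QP_def subset_iff)
  next
    case False
    then obtain B where B: "B \<in> QP n" "card B = k" "A = insert (Suc (Suc n)) B" using A by auto
    have "Suc (Suc n) \<notin> B" "finite B" using B QP_fin[OF B(1)] by (auto simp: QP_def)
    then have "card A = Suc k" using B by simp
    moreover have "A \<in> QP (Suc (Suc n))" using B(1) unfolding B(3) QP_def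
      by (auto simp: subset_iff)
    ultimately show ?thesis by simp
  qed
qed

lemma card_QP: "card {A \<in> QP n. card A = k} = (n + 1 - k) choose k"
proof (induction n arbitrary: k rule: less_induct)
  case (less n)
  show ?case
  proof (cases k)
    case 0 then show ?thesis using QP_card0 by simp
  next
    case (Suc k')
    show ?thesis
    proof (cases n)
      case 0 then show ?thesis using Suc by (simp add: QP_0)
    next
      case (Suc n')
      show ?thesis
      proof (cases n')
        case 0
        have e: "{A. (A = {} \<or> A = {Suc 0}) \<and> card A = Suc 0} = {{Suc 0}}" by auto
        show ?thesis using Suc \<open>k = Suc k'\<close> 0 by (cases k') (auto simp: QP_1 e)
      next
        case (Suc m)
        have n: "n = Suc (Suc m)" using Suc \<open>n = Suc n'\<close> by simp
        have disj: "{A \<in> QP (Suc m). card A = Suc k'} \<inter> insert (Suc (Suc m)) ` {B \<in> QP m. card B = k'} = {}"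
          by (auto simp: QP_def)
        have inj: "inj_on (insert (Suc (Suc m))) {B \<in> QP m. card B = k'}"
          by (rule inj_onI) (auto simp: QP_def, (metis insert_absorb insert_ident Suc_n_not_le_n le_SucI subsetD atLeastAtMost_iff)+)
        have fin1: "finite {A \<in> QP (Suc m). card A = Suc k'}"
          by (rule finite_subset[of _ "Pow {1..Suc m}"]) (auto simp: QP_def)
        have fin2: "finite {B \<in> QP m. card B = k'}"
          by (rule finite_subset[of _ "Pow {1..m}"]) (auto simp: QP_def)
        have "card {A \<in> QP n. card A = k} = card {A \<in> QP (Suc m). card A = Suc k'} + card {B \<in> QP m. card B = k'}"
          unfolding n \<open>k = Suc k'\<close> QP_split
          by (subst card_Un_disjoint) (use disj fin1 fin2 inj in \<open>auto simp: card_image\<close>)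
        also have "\<dots> = ((Suc m + 1 - Suc k') choose Suc k') + ((m + 1 - k') choose k')"
          using less n by simp
        also have "\<dots> = (n + 1 - k) choose k"
        proof (cases "k' \<le> m + 1")
          case True
          then have "n + 1 - k = Suc (m + 1 - k')" using n \<open>k = Suc k'\<close> by simp
          then show ?thesis using \<open>k = Suc k'\<close> by simp
        next
          case False
          then show ?thesis using n \<open>k = Suc k'\<close> by simp
        qed
        finally show ?thesis .
      qed
    qed
  qed
qed

lemma qnr_closed: "qnr n r = (if r < 0 then 0 else (n + 1 - nat r) choose nat r)"
proof (cases "r < 0")
  case True
  then have "{A \<in> QP n. int (card A) = r} = {}" by auto
  then show ?thesis using True by (simp add: qnr_def)
next
  case False
  then have "{A \<in> QP n. int (card A) = r} = {A \<in> QP n. card A = nat r}" by auto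
  then show ?thesis using False card_QP by (simp add: qnr_def)
qed



lemma q_pos: "0 \<le> j \<Longrightarrow> 2*j \<le> int n + 1 \<Longrightarrow> qnr n j > 0"
  by (simp add: qnr_closed)

lemma q_zero: "j < 0 \<or> 2*j > int n + 1 \<Longrightarrow> qnr n j = 0"
  by (auto simp: qnr_closed binomial_eq_0_iff)

lemma ratio_nat: "(((k+d) choose (k+1)) * (k+1)) * (k+d+1) = (((k+d+1) choose k) * (d+1)) * d"
proof -
  have a: "Suc k * ((k+d) choose Suc k) = (k+d) * ((k+d - 1) choose k)" by (rule binomial_absorption)
  have b: "d * ((k+d) choose k) = (k+d) * ((k+d - 1) choose k)" using binomial_absorb_comp[of "k+d" k] by simp
  have c: "(d+1) * ((k+d+1) choose k) = (k+d+1) * ((k+d) choose k)" using binomial_absorb_comp[of "k+d+1" k] by simp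
  have "(((k+d) choose (k+1)) * (k+1)) * (k+d+1) = (Suc k * ((k+d) choose Suc k)) * (k+d+1)" by simp
  also have "\<dots> = (d * ((k+d) choose k)) * (k+d+1)" using a b by simp
  also have "\<dots> = d * ((k+d+1) * ((k+d) choose k))" by (simp only: mult_ac)
  also have "\<dots> = d * ((d+1) * ((k+d+1) choose k))" using c by simp
  finally show ?thesis by (simp only: mult_ac)
qed

lemma ratio: assumes "0 \<le> j" "2*j \<le> int n"
  shows "real (qnr n (j+1)) * ((real_of_int j + 1) * (real n - real_of_int j + 1))
       = real (qnr n j) * ((real n - 2*real_of_int j) * (real n - 2*real_of_int j + 1))"
proof -
  define k where "k = nat j"
  define p where "p = n - k"
  have j: "j = int k" using assms k_def by simp
  have kp: "k \<le> p" using assms unfolding p_def j by simp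
  have n: "n = p + k" using assms unfolding p_def j by simp
  have q1: "qnr n (j+1) = p choose (k+1)" unfolding qnr_closed j using n
    by (simp add: nat_add_distrib)
  have q0: "qnr n j = (p+1) choose k" unfolding qnr_closed j using n by simp
  define d where "d = p - k"
  have pd: "p = k + d" using kp d_def by simp
  have "real ((((k+d) choose (k+1)) * (k+1)) * (k+d+1)) = real ((((k+d+1) choose k) * (d+1)) * d)"
    using ratio_nat[of k d] by (simp only:)
  then have "real (p choose (k+1)) * (real k+1) * (real p+1) = real ((p+1) choose k) * (real p+1-real k) * (real p-real k)"
    unfolding pd by (simp add: algebra_simps)
  then show ?thesis unfolding q1 q0 using n j by (simp add: algebra_simps)
qed



definition al :: real where "al = (5 - sqrt 5) / 10"
definition ka :: real where "ka = 5 * sqrt 5"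

lemma al_bounds': "0.27 < al" "al < 0.28"
  unfolding al_def using real_less_rsqrt[of "11/5" 5] real_less_lsqrt[of "9/4" 5] by (auto simp: power2_eq_square)

lemma s5: "sqrt 5 * sqrt 5 = (5::real)" "11/5 < sqrt (5::real)" "sqrt (5::real) < 9/4"
proof -
  show "sqrt 5 * sqrt 5 = (5::real)" by simp
  show "11/5 < sqrt (5::real)" by (rule real_less_rsqrt) (simp add: power2_eq_square)
  show "sqrt (5::real) < 9/4" by (rule real_less_lsqrt) (auto simp: power2_eq_square)
qed

lemma alN_le: "0 \<le> N \<Longrightarrow> al * N \<le> N/2"
  using mult_right_mono[of al "1/2" N] al_bounds' by simp

lemma den_mono: fixes x y N :: real
  assumes "y \<le> x" "x + y \<le> N" shows "(y+1)*(N-y+1) \<le> (x+1)*(N-x+1)"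
proof -
  have "(x+1)*(N-x+1) - (y+1)*(N-y+1) = (x-y)*(N-x-y)" by (simp add: algebra_simps)
  moreover have "(x-y)*(N-x-y) \<ge> 0" using assms by simp
  ultimately show ?thesis by simp
qed

lemma den_al: "(al*N+1)*(N-al*N+1) = N^2/5 + N + 1"
proof -
  have "(al*N+1)*(N-al*N+1) = al*(1-al)*N^2 + N + 1" by (simp add: algebra_simps power2_eq_square)
  moreover have "al*(1-al) = 1/5" unfolding al_def using s5(1) by (simp add: field_simps algebra_simps)
  ultimately show ?thesis by simp
qed


lemma num_lt_den: fixes J N :: real
  assumes "al*N < J" "2*J \<le> N"
  shows "(N-2*J)*(N-2*J+1) < (J+1)*(N-J+1)"
proof -
  have b0: "0 \<le> N - 2*J" using assms by simp
  have "(1 - 2*al) * N > 0" using assms by (simp add: algebra_simps)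
  then have N0: "N > 0" using al_bounds' by (simp add: zero_less_mult_iff)
  have b1: "N - 2*J \<le> (sqrt 5/5)*N" using assms unfolding al_def by (simp add: field_simps)
  have "(N-2*J)*(N-2*J+1) \<le> ((sqrt 5/5)*N)*((sqrt 5/5)*N+1)"
    using b0 b1 by (intro mult_mono) auto
  also have "\<dots> = N^2/5 + (sqrt 5/5)*N" using s5(1) by (simp add: field_simps power2_eq_square)
  also have "\<dots> < N^2/5 + N + 1"
  proof -
    have "(sqrt 5/5)*N \<le> 1 * N" using s5 N0 by (intro mult_right_mono) auto
    then show ?thesis by simp
  qed
  also have "\<dots> = (al*N+1)*(N-al*N+1)" by (rule den_al[symmetric])
  also have "\<dots> \<le> (J+1)*(N-J+1)" using assms alN_le[of N] N0 by (intro den_mono) auto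
  finally show ?thesis .
qed

lemma num_gt_den: fixes J N :: real
  assumes "J + 1 \<le> al*N" "0 \<le> J"
  shows "(N-2*J)*(N-2*J+1) > (J+1)*(N-J+1)"
proof -
  have b1: "(sqrt 5/5)*N + 2 \<le> N - 2*J" using assms unfolding al_def by (simp add: field_simps)
  have "al * N > 0" using assms by simp
  then have N0: "0 \<le> N" using al_bounds' by (simp add: zero_less_mult_iff)
  have "(J+1)*(N-J+1) \<le> (al*N+1)*(N-al*N+1)" using assms alN_le[of N] N0 by (intro den_mono) auto
  also have "\<dots> = N^2/5 + N + 1" by (rule den_al)
  also have "\<dots> < ((sqrt 5/5)*N+2)*((sqrt 5/5)*N+3)"
  proof -
    have "((sqrt 5/5)*N+2)*((sqrt 5/5)*N+3) = N^2/5 + sqrt 5 * N + 6" using s5(1) by (simp add: field_simps power2_eq_square)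
    moreover have "1 * N \<le> sqrt 5 * N" using s5 N0 by (intro mult_right_mono) auto
    ultimately show ?thesis by simp
  qed
  also have "\<dots> \<le> (N-2*J)*(N-2*J+1)" proof -
    have "0 \<le> sqrt 5 * N" using N0 by simp
    then show ?thesis using b1 by (intro mult_mono) auto
  qed
  finally show ?thesis .
qed



lemma i2r: "2*j \<le> int n \<Longrightarrow> 2*real_of_int j \<le> real n"
  using of_int_le_iff[of "2*j" "int n"] by simp

lemma q0: "qnr n 0 = 1" by (simp add: qnr_closed)

lemma rstar: assumes mx: "\<And>r. qnr n r \<le> qnr n R"
  shows "al*n - 1 \<le> R" "R \<le> al*n + 1" "qnr n R > 0" "0 \<le> R" "2*R \<le> int n+1"
proof -
  have qp: "qnr n R > 0" using mx[of 0] q0 by simp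
  then show "qnr n R > 0" .
  show R0: "0 \<le> R" using qp q_zero[of R n] by (cases "R < 0") auto
  show R1: "2*R \<le> int n+1" using qp q_zero[of R n] by (cases "2*R > int n + 1") auto
  have N0: "0 \<le> real n" by simp
  show "R \<le> al*n + 1"
  proof (rule ccontr)
    assume c: "\<not> R \<le> al*n + 1"
    define j where "j = R - 1"
    have "0 \<le> al * real n" using al_bounds' by simp
    then have "real_of_int R > 1" using c by linarith
    then have j0: "0 \<le> j" unfolding j_def by simp
    have j2: "2*j \<le> int n" using R1 j_def by simp
    have jr: "j + 1 = R" using j_def by simp
    have rat: "real (qnr n R) * ((real_of_int j + 1) * (real n - real_of_int j + 1))
       = real (qnr n j) * ((real n - 2*real_of_int j) * (real n - 2*real_of_int j + 1))"
      using ratio[OF j0 j2] jr by simp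
    have lt: "(real n - 2*real_of_int j) * (real n - 2*real_of_int j + 1) < (real_of_int j + 1) * (real n - real_of_int j + 1)"
    proof (rule num_lt_den)
      show "al * real n < real_of_int j" using c unfolding j_def by simp
      show "2 * real_of_int j \<le> real n" using i2r[OF j2] .
    qed
    have nn: "0 \<le> (real n - 2*real_of_int j) * (real n - 2*real_of_int j + 1)" using i2r[OF j2] by simp
    have "real (qnr n j) * ((real n - 2*real_of_int j) * (real n - 2*real_of_int j + 1))
        \<le> real (qnr n R) * ((real n - 2*real_of_int j) * (real n - 2*real_of_int j + 1))"
      using mx[of j] nn by (intro mult_right_mono) auto
    also have "\<dots> < real (qnr n R) * ((real_of_int j + 1) * (real n - real_of_int j + 1))"
      using qp lt by (intro mult_strict_left_mono) auto
    finally show False using rat by simp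
  qed
  show "al*n - 1 \<le> R"
  proof (rule ccontr)
    assume c: "\<not> al*n - 1 \<le> R"
    have Rn: "2*R \<le> int n"
    proof -
      have "real_of_int R < al * n" using c by simp
      also have "\<dots> \<le> n/2" using alN_le[of "real n"] by simp
      finally show ?thesis by linarith
    qed
    have rat: "real (qnr n (R+1)) * ((real_of_int R + 1) * (real n - real_of_int R + 1))
       = real (qnr n R) * ((real n - 2*real_of_int R) * (real n - 2*real_of_int R + 1))"
      using ratio[OF R0 Rn] by simp
    have gt: "(real n - 2*real_of_int R) * (real n - 2*real_of_int R + 1) > (real_of_int R + 1) * (real n - real_of_int R + 1)"
      apply (rule num_gt_den) using c R0 by auto
    have dp: "0 \<le> (real_of_int R + 1) * (real n - real_of_int R + 1)" using i2r[OF Rn] R0 by simp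
    have "real (qnr n (R+1)) * ((real_of_int R + 1) * (real n - real_of_int R + 1))
        \<le> real (qnr n R) * ((real_of_int R + 1) * (real n - real_of_int R + 1))"
      using mx[of "R+1"] dp by (intro mult_right_mono) auto
    also have "\<dots> < real (qnr n R) * ((real n - 2*real_of_int R) * (real n - 2*real_of_int R + 1))"
      using qp gt by (intro mult_strict_left_mono) auto
    finally show False using rat by simp
  qed
qed

lemma mono_down: assumes "al * n \<le> real_of_int j" shows "qnr n (j+1) \<le> qnr n j"
proof (cases "2*j \<le> int n")
  case False
  then show ?thesis using q_zero[of "j+1" n] by simp
next
  case True
  have "0 \<le> al * real n" using al_bounds' by simp
  then have "real_of_int j \<ge> 0" using assms by linarith
  then have j0: "0 \<le> j" by simp
  have rat: "real (qnr n (j+1)) * ((real_of_int j + 1) * (real n - real_of_int j + 1))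
       = real (qnr n j) * ((real n - 2*real_of_int j) * (real n - 2*real_of_int j + 1))"
    using ratio[OF j0 True] by simp
  have le: "(real n - 2*real_of_int j) * (real n - 2*real_of_int j + 1) \<le> (real_of_int j + 1) * (real n - real_of_int j + 1)"
  proof (cases "al * n < real_of_int j")
    case True
    then show ?thesis using num_lt_den[OF True] i2r[OF \<open>2*j \<le> int n\<close>] by simp
  next
    case False
    then have "al * n = real_of_int j" using assms by simp
    then have "(real_of_int j + 1) * (real n - real_of_int j + 1) = n^2/5 + n + 1" using den_al[of n] by simp
    moreover have e: "(real n - 2*real_of_int j) = (sqrt 5/5) * n" using \<open>al * n = real_of_int j\<close>[symmetric]
      unfolding al_def by (simp add: field_simps)
    moreover have "(sqrt 5/5) * n * ((sqrt 5/5) * n + 1) = n^2/5 + (sqrt 5/5)*n" by (simp add: field_simps power2_eq_square)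
    moreover have "(sqrt 5/5)*real n \<le> 1 * real n" using s5 by (intro mult_right_mono) auto
    ultimately show ?thesis unfolding e by simp
  qed
  have dp: "0 < (real_of_int j + 1) * (real n - real_of_int j + 1)" using i2r[OF True] j0 by simp
  have nn: "0 \<le> (real n - 2*real_of_int j) * (real n - 2*real_of_int j + 1)" using i2r[OF True] by simp
  have "real (qnr n (j+1)) * ((real_of_int j + 1) * (real n - real_of_int j + 1))
       \<le> real (qnr n j) * ((real_of_int j + 1) * (real n - real_of_int j + 1))"
    using rat le by (simp add: mult_left_mono)
  then show ?thesis using dp by (simp add: mult_le_cancel_right_pos)
qed

lemma mono_up: assumes "real_of_int j + 1 \<le> al * n" shows "qnr n j \<le> qnr n (j+1)"
proof (cases "j < 0")
  case True then show ?thesis using q_zero[of j n] by simp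
next
  case False
  then have j0: "0 \<le> j" by simp
  have Rn: "2*j \<le> int n"
  proof -
    have "real_of_int j < al * n" using assms by simp
    also have "\<dots> \<le> n/2" using alN_le[of "real n"] by simp
    finally show ?thesis by linarith
  qed
  have rat: "real (qnr n (j+1)) * ((real_of_int j + 1) * (real n - real_of_int j + 1))
       = real (qnr n j) * ((real n - 2*real_of_int j) * (real n - 2*real_of_int j + 1))"
    using ratio[OF j0 Rn] by simp
  have gt: "(real n - 2*real_of_int j) * (real n - 2*real_of_int j + 1) > (real_of_int j + 1) * (real n - real_of_int j + 1)"
    by (rule num_gt_den) (use assms j0 in auto)
  have dp: "0 < (real_of_int j + 1) * (real n - real_of_int j + 1)" using i2r[OF Rn] j0 by simp
  have "real (qnr n j) * ((real_of_int j + 1) * (real n - real_of_int j + 1))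
       \<le> real (qnr n j) * ((real n - 2*real_of_int j) * (real n - 2*real_of_int j + 1))"
    using gt by (intro mult_left_mono) auto
  then have "real (qnr n j) * ((real_of_int j + 1) * (real n - real_of_int j + 1))
       \<le> real (qnr n (j+1)) * ((real_of_int j + 1) * (real n - real_of_int j + 1))" using rat by simp
  then have "real (qnr n j) \<le> real (qnr n (j+1))" using mult_le_cancel_right_pos[OF dp] by blast
  then show ?thesis by simp
qed

lemma chain_down: assumes "al * n \<le> real_of_int a" "a \<le> b" shows "qnr n b \<le> qnr n a"
  using assms(2)
proof (induction b rule: int_ge_induct)
  case base then show ?case by simp
next
  case (step i)
  have "al * n \<le> real_of_int i" using assms(1) step(1) by linarith
  then show ?case using mono_down[of n i] step by simp
qed

lemma chain_up: assumes "real_of_int b \<le> al * n" "a \<le> b" shows "qnr n a \<le> qnr n b"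
  using assms(2)
proof (induction a rule: int_le_induct)
  case base then show ?case by simp
next
  case (step i)
  have "real_of_int (i - 1) + 1 \<le> al * n" using assms(1) step(1) by simp
  then show ?case using mono_up[of "i-1" n] step by simp
qed



lemma tb: fixes t N d :: real assumes "N > 0" "10*(\<bar>d\<bar>+1) \<le> N" "\<bar>t\<bar> \<le> 5*(\<bar>d\<bar>+1)/N"
  shows "\<bar>ln (1+t) - t\<bar> \<le> 50*(\<bar>d\<bar>+1)^2/N^2" "1 + t > 0"
proof -
  have h: "5*(\<bar>d\<bar>+1)/N \<le> 1/2" using assms by (simp add: field_simps)
  then have t2: "\<bar>t\<bar> \<le> 1/2" using assms by linarith
  then show "1 + t > 0" by linarith
  have "\<bar>ln (1+t) - t\<bar> \<le> 2 * t^2" using abs_ln_one_plus_x_minus_x_bound[OF t2] .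
  also have "t^2 = \<bar>t\<bar>^2" by simp
  also have "\<bar>t\<bar>^2 \<le> (5*(\<bar>d\<bar>+1)/N)^2" using assms(3) by (intro power_mono) auto
  also have "(5*(\<bar>d\<bar>+1)/N)^2 = 25*(\<bar>d\<bar>+1)^2/N^2" by (simp add: power_divide power2_eq_square algebra_simps)
  finally show "\<bar>ln (1+t) - t\<bar> \<le> 50*(\<bar>d\<bar>+1)^2/N^2" by simp
qed

lemma lnrho: fixes N x :: real
  assumes N: "N > 0" and dN: "10*(\<bar>x - al*N\<bar>+1) \<le> N"
  shows "N - 2*x > 0" "x + 1 > 0" "N - x + 1 > 0"
    "\<bar>ln (N-2*x) + ln (N-2*x+1) - ln (x+1) - ln (N-x+1) - (-ka*(x - al*N) + sqrt 5 - 5)/N\<bar>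
       \<le> 200*(\<bar>x - al*N\<bar>+1)^2/N^2"
proof -
  define d where "d = x - al*N"
  define s where "s = sqrt (5::real)"
  have ss: "s*s = 5" "11/5 < s" "s < 9/4" using s5 unfolding s_def by auto
  have s2: "\<And>y. s*(s*y) = 5*y" using ss(1) by (metis mult.assoc)
  define b where "b = s/5"
  define g where "g = (5+s)/10"
  have al: "al = (5-s)/10" unfolding al_def s_def ..
  define t1 where "t1 = -2*s*d/N"
  define t2 where "t2 = s*(1-2*d)/N"
  define t3 where "t3 = ((5+s)/2)*(d+1)/N"
  define t4 where "t4 = ((5-s)/2)*(1-d)/N"
  have dN': "10*(\<bar>d\<bar>+1) \<le> N" using dN d_def by simp
  have e1: "N - 2*x = (b*N)*(1+t1)" unfolding t1_def b_def d_def al using N ss by (simp add: field_simps) (simp add: algebra_simps s2)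
  have e2: "N - 2*x + 1 = (b*N)*(1+t2)" unfolding t2_def b_def d_def al using N ss by (simp add: field_simps) (simp add: algebra_simps s2)
  have e3: "x + 1 = (al*N)*(1+t3)" unfolding t3_def d_def al using N ss
    by (simp add: field_simps) (simp add: algebra_simps s2)
  have e4: "N - x + 1 = (g*N)*(1+t4)" unfolding t4_def g_def d_def al using N ss
    by (simp add: field_simps) (simp add: algebra_simps s2)
  have B1: "\<bar>t1\<bar> \<le> 5*(\<bar>d\<bar>+1)/N"
  proof -
    have "2*s*\<bar>d\<bar> \<le> 5 * \<bar>d\<bar>" using ss by (intro mult_right_mono) auto
    then have "\<bar>-2*s*d\<bar> \<le> 5*(\<bar>d\<bar>+1)" using ss by (simp add: abs_mult)
    then show ?thesis unfolding t1_def using N by (simp add: abs_divide divide_right_mono)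
  qed
  have B2: "\<bar>t2\<bar> \<le> 5*(\<bar>d\<bar>+1)/N"
  proof -
    have a: "\<bar>1-2*d\<bar> \<le> 1 + 2*\<bar>d\<bar>" by arith
    have "s*\<bar>1-2*d\<bar> \<le> s*(1 + 2*\<bar>d\<bar>)" using a ss by (intro mult_left_mono) auto
    also have "\<dots> \<le> (9/4)*(1 + 2*\<bar>d\<bar>)" using ss by (intro mult_right_mono) auto
    finally have "\<bar>s*(1-2*d)\<bar> \<le> 5*(\<bar>d\<bar>+1)" using ss by (simp add: abs_mult)
    moreover have "\<bar>t2\<bar> = \<bar>s*(1-2*d)\<bar> / N" unfolding t2_def using N by (simp only: abs_divide abs_of_pos[OF N])
    ultimately show ?thesis using N by (metis divide_right_mono less_imp_le)
  qed
  have B3: "\<bar>t3\<bar> \<le> 5*(\<bar>d\<bar>+1)/N"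
  proof -
    have a: "\<bar>d+1\<bar> \<le> \<bar>d\<bar> + 1" by arith
    have "((5+s)/2)*\<bar>d+1\<bar> \<le> ((5+s)/2)*(\<bar>d\<bar> + 1)" using a ss by (intro mult_left_mono) auto
    also have "\<dots> \<le> 5*(\<bar>d\<bar> + 1)" using ss by (intro mult_right_mono) auto
    finally have "\<bar>((5+s)/2)*(d+1)\<bar> \<le> 5*(\<bar>d\<bar>+1)" using ss by (simp add: abs_mult)
    moreover have "\<bar>t3\<bar> = \<bar>((5+s)/2)*(d+1)\<bar> / N" unfolding t3_def using N by (simp only: abs_divide abs_of_pos[OF N])
    ultimately show ?thesis using N by (metis divide_right_mono less_imp_le)
  qed
  have B4: "\<bar>t4\<bar> \<le> 5*(\<bar>d\<bar>+1)/N"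
  proof -
    have a: "\<bar>1-d\<bar> \<le> \<bar>d\<bar> + 1" by arith
    have "((5-s)/2)*\<bar>1-d\<bar> \<le> ((5-s)/2)*(\<bar>d\<bar> + 1)" using a ss by (intro mult_left_mono) auto
    also have "\<dots> \<le> 5*(\<bar>d\<bar> + 1)" using ss by (intro mult_right_mono) auto
    finally have "\<bar>((5-s)/2)*(1-d)\<bar> \<le> 5*(\<bar>d\<bar>+1)" using ss by (simp add: abs_mult)
    moreover have "\<bar>t4\<bar> = \<bar>((5-s)/2)*(1-d)\<bar> / N" unfolding t4_def using N by (simp only: abs_divide abs_of_pos[OF N])
    ultimately show ?thesis using N by (metis divide_right_mono less_imp_le)
  qed
  note T1 = tb[OF N dN' B1] and T2 = tb[OF N dN' B2] and T3 = tb[OF N dN' B3] and T4 = tb[OF N dN' B4]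
  have bN: "b*N > 0" "al*N > 0" "g*N > 0" using N ss al_bounds' unfolding b_def g_def by auto
  show "N - 2*x > 0" unfolding e1 using bN T1 by simp
  have "N - 2*x + 1 > 0" unfolding e2 using bN T2 by simp
  show "x + 1 > 0" unfolding e3 using bN T3 by simp
  show "N - x + 1 > 0" unfolding e4 using bN T4 by simp
  have l1: "ln (N-2*x) = ln (b*N) + ln (1+t1)" unfolding e1 by (rule ln_mult_pos) (use bN T1 in auto)
  have l2: "ln (N-2*x+1) = ln (b*N) + ln (1+t2)" unfolding e2 by (rule ln_mult_pos) (use bN T2 in auto)
  have l3: "ln (x+1) = ln (al*N) + ln (1+t3)" unfolding e3 by (rule ln_mult_pos) (use bN T3 in auto)
  have l4: "ln (N-x+1) = ln (g*N) + ln (1+t4)" unfolding e4 by (rule ln_mult_pos) (use bN T4 in auto)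
  have bb: "(b*N)*(b*N) = (al*N)*(g*N)" unfolding b_def g_def al using ss by (simp add: field_simps)
  have l0: "ln (b*N) + ln (b*N) = ln (al*N) + ln (g*N)"
    using bN by (metis bb ln_mult_pos)
  have S: "t1 + t2 - t3 - t4 = (-ka*d + sqrt 5 - 5)/N" unfolding t1_def t2_def t3_def t4_def ka_def s_def
    using N by (simp add: field_simps)
  have "ln (N-2*x) + ln (N-2*x+1) - ln (x+1) - ln (N-x+1) - (-ka*d + sqrt 5 - 5)/N
     = (ln (1+t1) - t1) + (ln (1+t2) - t2) - (ln (1+t3) - t3) - (ln (1+t4) - t4)"
    using l1 l2 l3 l4 l0 S by simp
  also have "\<bar>\<dots>\<bar> \<le> 200*(\<bar>d\<bar>+1)^2/N^2" using T1(1) T2(1) T3(1) T4(1) by linarith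
  finally show "\<bar>ln (N-2*x) + ln (N-2*x+1) - ln (x+1) - ln (N-x+1) - (-ka*(x - al*N) + sqrt 5 - 5)/N\<bar>
       \<le> 200*(\<bar>x - al*N\<bar>+1)^2/N^2" unfolding d_def .
qed



definition Gf :: "nat \<Rightarrow> int \<Rightarrow> real" where
  "Gf n r = ln (real (qnr n r)) + ka * (real_of_int r - al * n)^2 / (2 * real n)"

lemma near_pos: assumes "real n > 0" "10*(\<bar>real_of_int j - al*n\<bar>+1) \<le> real n"
  shows "0 \<le> j" "2*j < int n"
proof -
  have h: "\<bar>real_of_int j - al*n\<bar> \<le> n/10" using assms by simp
  have h1: "real_of_int j - al*n \<le> n/10" "-(n/10) \<le> real_of_int j - al*n" using h by linarith+
  have a1: "(27/100) * real n \<le> al * n" using mult_right_mono[OF less_imp_le[OF al_bounds'(1)], of "real n"] by simp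
  have a2: "al * n \<le> (28/100) * real n" using mult_right_mono[OF less_imp_le[OF al_bounds'(2)], of "real n"] by simp
  have "real_of_int j \<ge> 0" using h1 a1 assms(1) by linarith
  then show "0 \<le> j" by simp
  have "2*real_of_int j < real n" using h1 a2 assms(1) by linarith
  then show "2*j < int n" by linarith
qed

lemma Gstep: assumes n: "real n > 0" and dn: "10*(\<bar>real_of_int j - al*n\<bar>+1) \<le> real n"
  shows "qnr n j > 0" "qnr n (j+1) > 0"
    "\<bar>Gf n (j+1) - Gf n j\<bar> \<le> 3/n + 200*(\<bar>real_of_int j - al*n\<bar>+1)^2/(real n)^2"
proof -
  note np = near_pos[OF n dn]
  show qj: "qnr n j > 0" using np by (intro q_pos) auto
  show qj1: "qnr n (j+1) > 0" using np by (intro q_pos) auto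
  note L = lnrho[OF n dn]
  have rat: "real (qnr n (j+1)) * ((real_of_int j + 1) * (real n - real_of_int j + 1))
       = real (qnr n j) * ((real n - 2*real_of_int j) * (real n - 2*real_of_int j + 1))"
    using ratio[of j n] np by simp
  have "ln (real (qnr n (j+1)) * ((real_of_int j + 1) * (real n - real_of_int j + 1)))
     = ln (real (qnr n j) * ((real n - 2*real_of_int j) * (real n - 2*real_of_int j + 1)))"
    using rat by simp
  then have "ln (real (qnr n (j+1))) + (ln (real_of_int j + 1) + ln (real n - real_of_int j + 1))
     = ln (real (qnr n j)) + (ln (real n - 2*real_of_int j) + ln (real n - 2*real_of_int j + 1))"
    using qj qj1 L(1,2,3) by (simp add: ln_mult_pos)
  then have dl: "ln (real (qnr n (j+1))) - ln (real (qnr n j)) =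
     ln (real n - 2*real_of_int j) + ln (real n - 2*real_of_int j + 1) - ln (real_of_int j + 1) - ln (real n - real_of_int j + 1)"
    by simp
  define d where "d = real_of_int j - al*n"
  have sq: "ka * (real_of_int (j+1) - al * n)^2 / (2 * real n) - ka * (real_of_int j - al * n)^2 / (2 * real n)
      = ka*d/n + ka/(2*real n)"
    unfolding d_def using n by (simp add: field_simps power2_eq_square)
  define LL where "LL = ln (real n - 2*real_of_int j) + ln (real n - 2*real_of_int j + 1) - ln (real_of_int j + 1) - ln (real n - real_of_int j + 1)"
  have "Gf n (j+1) - Gf n j = (ln (real (qnr n (j+1))) - ln (real (qnr n j))) +
     (ka * (real_of_int (j+1) - al * n)^2 / (2 * real n) - ka * (real_of_int j - al * n)^2 / (2 * real n))"
    unfolding Gf_def by simp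
  also have "\<dots> = LL + (ka*d/n + ka/(2*real n))" unfolding sq dl LL_def ..
  also have "\<dots> = (LL - (-ka*d + sqrt 5 - 5)/n) + (sqrt 5 - 5 + ka/2)/n"
    using n by (simp add: field_simps)
  finally have "Gf n (j+1) - Gf n j = (LL - (-ka*d + sqrt 5 - 5)/n) + (sqrt 5 - 5 + ka/2)/n" .
  moreover have "\<bar>(sqrt 5 - 5 + ka/2)/n\<bar> \<le> 3/n"
  proof -
    have "\<bar>sqrt 5 - 5 + ka/2\<bar> \<le> 3" unfolding ka_def using s5 by auto
    then show ?thesis using n by (simp add: abs_divide divide_right_mono)
  qed
  ultimately show "\<bar>Gf n (j+1) - Gf n j\<bar> \<le> 3/n + 200*(\<bar>real_of_int j - al*n\<bar>+1)^2/(real n)^2"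
    using L(4) unfolding d_def LL_def by linarith
qed

lemma lip: fixes F :: "int \<Rightarrow> real"
  assumes "a \<le> b" "\<And>j. a \<le> j \<Longrightarrow> j < b \<Longrightarrow> \<bar>F (j+1) - F j\<bar> \<le> E"
  shows "\<bar>F b - F a\<bar> \<le> real_of_int (b - a) * E"
  using assms
proof (induction b rule: int_ge_induct)
  case base then show ?case by simp
next
  case (step i)
  have "\<bar>F i - F a\<bar> \<le> real_of_int (i - a) * E" using step by auto
  moreover have "\<bar>F (i+1) - F i\<bar> \<le> E" using step by auto
  ultimately show ?case by (simp add: algebra_simps)
qed

lemma part1_fixed:
  assumes mx: "\<And>r. qnr n r \<le> qnr n R" and n: "real n > 0" and K: "0 \<le> K" "10*(K+3) \<le> real n"
    and r: "\<bar>real_of_int (r - R)\<bar> \<le> K"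
  shows "qnr n r > 0"
    "\<bar>ln (real (qnr n r)) - ln (real (qnr n R)) + ka * (real_of_int (r - R))^2 / (2*real n)\<bar>
       \<le> K * (3/n + 200*(K+2)^2/(real n)^2) + 12*K/n"
proof -
  note rs = rstar[OF mx]
  define E where "E = 3/n + 200*(K+2)^2/(real n)^2"
  have E0: "0 \<le> E" unfolding E_def using n by simp
  have near: "10*(\<bar>real_of_int j - al*n\<bar>+1) \<le> real n" if "\<bar>real_of_int j - al*n\<bar> \<le> K + 1" for j
  proof -
    have "10*(\<bar>real_of_int j - al*n\<bar>+1) \<le> 10*(K+3)" using that by simp
    then show ?thesis using K by linarith
  qed
  have stepE: "\<bar>Gf n (j+1) - Gf n j\<bar> \<le> E" if "\<bar>real_of_int j - al*n\<bar> \<le> K + 1" for j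
  proof -
    have "(\<bar>real_of_int j - al*n\<bar>+1)^2 \<le> (K+2)^2" using that by (intro power_mono) auto
    then have "200*(\<bar>real_of_int j - al*n\<bar>+1)^2/(real n)^2 \<le> 200*(K+2)^2/(real n)^2"
      by (intro divide_right_mono) auto
    then show ?thesis using Gstep(3)[OF n near[OF that]] unfolding E_def by linarith
  qed
  have rnear: "\<bar>real_of_int r - al*n\<bar> \<le> K + 1" using r rs(1,2) by auto
  show "qnr n r > 0" using Gstep(1)[OF n near[OF rnear]] .
  have G: "\<bar>Gf n r - Gf n R\<bar> \<le> K * E"
  proof (cases "R \<le> r")
    case True
    have "\<bar>Gf n r - Gf n R\<bar> \<le> real_of_int (r - R) * E"
    proof (rule lip[OF True])
      fix j assume "R \<le> j" "j < r"
      then have "\<bar>real_of_int j - al*n\<bar> \<le> K + 1" using r rs(1,2) by auto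
      then show "\<bar>Gf n (j+1) - Gf n j\<bar> \<le> E" by (rule stepE)
    qed
    also have "\<dots> \<le> K * E" using r True E0 by (intro mult_right_mono) auto
    finally show ?thesis .
  next
    case False
    have "\<bar>Gf n R - Gf n r\<bar> \<le> real_of_int (R - r) * E"
    proof (rule lip)
      show "r \<le> R" using False by simp
      fix j assume "r \<le> j" "j < R"
      then have "\<bar>real_of_int j - al*n\<bar> \<le> K + 1" using r rs(1,2) by auto
      then show "\<bar>Gf n (j+1) - Gf n j\<bar> \<le> E" by (rule stepE)
    qed
    also have "\<dots> \<le> K * E" using r False E0 by (intro mult_right_mono) auto
    finally show ?thesis by (simp add: abs_minus_commute)
  qed
  define k where "k = real_of_int (r - R)"
  define e where "e = real_of_int R - al*n"
  have e1: "\<bar>e\<bar> \<le> 1" unfolding e_def using rs(1,2) by auto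
  have id: "ln (real (qnr n r)) - ln (real (qnr n R)) + ka * k^2 / (2*real n) = (Gf n r - Gf n R) - ka*k*e/n"
    unfolding Gf_def k_def e_def using n by (simp add: field_simps power2_eq_square)
  have "\<bar>ka*k*e/n\<bar> \<le> 12*K/n"
  proof -
    have ka: "0 \<le> ka" "ka \<le> 12" unfolding ka_def using s5 by auto
    have "\<bar>ka*k*e\<bar> = ka*\<bar>k\<bar>*\<bar>e\<bar>" using ka by (simp add: abs_mult)
    also have "\<dots> \<le> 12 * K * 1" using ka r e1 unfolding k_def by (intro mult_mono) auto
    finally show ?thesis using n by (simp add: abs_divide divide_right_mono)
  qed
  then show "\<bar>ln (real (qnr n r)) - ln (real (qnr n R)) + ka * (real_of_int (r - R))^2 / (2*real n)\<bar>
       \<le> K * (3/n + 200*(K+2)^2/(real n)^2) + 12*K/n"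
    using id G unfolding k_def[symmetric] E_def by linarith
qed



lemma boundary:
  assumes mx: "\<And>r. qnr n r \<le> qnr n R" and n: "real n > 0" and K: "1 \<le> K" "10*(K+3) \<le> real n"
    and B: "K * (3/real n + 200*(K+2)^2/(real n)^2) + 12*K/real n \<le> 1" and KK: "12*K/real n \<le> 1"
    and r: "\<bar>real_of_int (r - R)\<bar> \<le> K" "K - 1 \<le> \<bar>real_of_int (r - R)\<bar>"
  shows "real (qnr n r) \<le> exp (2 - ka*K^2/(2*real n)) * real (qnr n R)"
proof -
  note P = part1_fixed[OF mx n _ K(2) r(1)]
  have K0: "0 \<le> K" using K by simp
  have qR: "qnr n R > 0" using rstar[OF mx] by simp
  have ka: "0 \<le> ka" "ka \<le> 12" unfolding ka_def using s5 by auto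
  define k where "k = \<bar>real_of_int (r - R)\<bar>"
  have "(K-1)^2 \<le> k^2" using r K unfolding k_def by (intro power_mono) auto
  then have k2: "K^2 - 2*K \<le> k^2" by (simp add: power2_eq_square algebra_simps)
  have "ka*(K^2 - 2*K) \<le> ka*k^2" using k2 ka by (intro mult_left_mono) auto
  then have "ka*(K^2 - 2*K)/(2*real n) \<le> ka*k^2/(2*real n)" using n by (intro divide_right_mono) auto
  moreover have "ka*(K^2 - 2*K)/(2*real n) = ka*K^2/(2*real n) - ka*K/real n" using n by (simp add: field_simps)
  moreover have "ka*K/real n \<le> 12*K/real n" using ka K0 n by (intro divide_right_mono mult_right_mono) auto
  ultimately have c1: "- (ka*k^2/(2*real n)) \<le> 1 - ka*K^2/(2*real n)" using KK by linarith
  have eq: "ka * (real_of_int (r - R))^2 = ka*k^2" unfolding k_def by simp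
  have "ln (real (qnr n r)) \<le> ln (real (qnr n R)) - ka*k^2/(2*real n) + 1"
    using P(2)[OF K0, unfolded eq] B unfolding abs_le_iff by linarith
  then have "ln (real (qnr n r)) \<le> ln (real (qnr n R)) + (2 - ka*K^2/(2*real n))" using c1 by linarith
  then have "exp (ln (real (qnr n r))) \<le> exp (ln (real (qnr n R)) + (2 - ka*K^2/(2*real n)))" by simp
  then show ?thesis using P(1)[OF K0] qR by (simp add: exp_add mult.commute)
qed

lemma tail_bound:
  assumes mx: "\<And>r. qnr n r \<le> qnr n R" and n: "real n > 0" and K: "1 \<le> K" "10*(K+3) \<le> real n"
    and B: "K * (3/real n + 200*(K+2)^2/(real n)^2) + 12*K/real n \<le> 1" and KK: "12*K/real n \<le> 1"
    and r: "K < \<bar>real_of_int (r - R)\<bar>"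
  shows "real (qnr n r) \<le> exp (2 - ka*K^2/(2*real n)) * real (qnr n R)"
proof -
  note rs = rstar[OF mx]
  define f where "f = \<lfloor>K\<rfloor>"
  have f: "real_of_int f \<le> K" "K - 1 < real_of_int f" "1 \<le> f" unfolding f_def using K by linarith+
  show ?thesis
  proof (cases "R < r")
    case True
    define r1 where "r1 = R + f"
    have "qnr n r \<le> qnr n r1"
    proof (rule chain_down)
      show "al * real n \<le> real_of_int r1" using rs(1) f by (simp add: r1_def)
      show "r1 \<le> r" using r True f unfolding r1_def by linarith
    qed
    moreover have "real (qnr n r1) \<le> exp (2 - ka*K^2/(2*real n)) * real (qnr n R)"
      by (rule boundary[OF mx n K B KK]) (use f in \<open>auto simp: r1_def\<close>)
    ultimately show ?thesis by linarith
  next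
    case False
    define r0 where "r0 = R - f"
    have "qnr n r \<le> qnr n r0"
    proof (rule chain_up)
      show "real_of_int r0 \<le> al * real n" using rs(2) f by (simp add: r0_def)
      show "r \<le> r0" using r False f unfolding r0_def by linarith
    qed
    moreover have "real (qnr n r0) \<le> exp (2 - ka*K^2/(2*real n)) * real (qnr n R)"
      by (rule boundary[OF mx n K B KK]) (use f in \<open>auto simp: r0_def\<close>)
    ultimately show ?thesis by linarith
  qed
qed

lemma count_bound:
  assumes mx: "\<And>r. qnr n r \<le> qnr n R" and n: "real n > 0" and K: "1 \<le> K" "10*(K+3) \<le> real n"
    and B: "K * (3/real n + 200*(K+2)^2/(real n)^2) + 12*K/real n \<le> 1" and KK: "12*K/real n \<le> 1"
  shows "real (card {A \<in> QP n. \<bar>real (card A) - real_of_int R\<bar> > K})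
     \<le> (real n + 1) * (exp (2 - ka*K^2/(2*real n)) * real (qnr n R))"
proof -
  define M where "M = {m \<in> {0..n}. K < \<bar>real m - real_of_int R\<bar>}"
  define Bd where "Bd = exp (2 - ka*K^2/(2*real n)) * real (qnr n R)"
  have sub: "{A \<in> QP n. \<bar>real (card A) - real_of_int R\<bar> > K} \<subseteq> (\<Union>m\<in>M. {A \<in> QP n. card A = m})"
  proof
    fix A assume A: "A \<in> {A \<in> QP n. \<bar>real (card A) - real_of_int R\<bar> > K}"
    then have "A \<subseteq> {1..n}" by (simp add: QP_def)
    then have "card A \<le> n" using card_mono[of "{1..n}" A] by simp
    then show "A \<in> (\<Union>m\<in>M. {A \<in> QP n. card A = m})" using A unfolding M_def by auto
  qed
  have finM: "finite M" unfolding M_def by simp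
  have fin: "finite (\<Union>m\<in>M. {A \<in> QP n. card A = m})"
    by (rule finite_subset[of _ "Pow {1..n}"]) (auto simp: QP_def)
  have "card {A \<in> QP n. \<bar>real (card A) - real_of_int R\<bar> > K} \<le> card (\<Union>m\<in>M. {A \<in> QP n. card A = m})"
    by (rule card_mono[OF fin sub])
  also have "\<dots> \<le> (\<Sum>m\<in>M. card {A \<in> QP n. card A = m})" by (rule card_UN_le[OF finM])
  finally have c1: "real (card {A \<in> QP n. \<bar>real (card A) - real_of_int R\<bar> > K}) \<le> (\<Sum>m\<in>M. real (qnr n (int m)))"
    unfolding qnr_def by (simp add: of_nat_sum[symmetric] del: of_nat_sum)
  have "(\<Sum>m\<in>M. real (qnr n (int m))) \<le> real (card M) * Bd"
  proof (rule sum_bounded_above)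
    fix m assume "m \<in> M"
    then have "K < \<bar>real_of_int (int m - R)\<bar>" unfolding M_def by simp
    then show "real (qnr n (int m)) \<le> Bd" unfolding Bd_def by (rule tail_bound[OF mx n K B KK])
  qed
  also have "\<dots> \<le> (real n + 1) * Bd"
  proof -
    have "card M \<le> card {0..n}" unfolding M_def by (intro card_mono) auto
    then have "real (card M) \<le> real n + 1" by simp
    moreover have "0 \<le> Bd" unfolding Bd_def by simp
    ultimately show ?thesis by (intro mult_right_mono) auto
  qed
  finally show ?thesis using c1 unfolding Bd_def by linarith
qed



lemma ev_facts:
  "eventually (\<lambda>n::nat. 10*(sqrt (real n * ln (real n))+3) \<le> real n) at_top"
  "eventually (\<lambda>n::nat. 1 \<le> sqrt (real n * ln (real n))) at_top"
  "eventually (\<lambda>n::nat. 12*sqrt (real n * ln (real n))/real n \<le> 1) at_top"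
  "((\<lambda>n::nat. sqrt (real n * ln (real n)) * (3/real n + 200*(sqrt (real n * ln (real n))+2)^2/(real n)^2)
      + 12*sqrt (real n * ln (real n))/real n) \<longlongrightarrow> 0) at_top"
  "((\<lambda>n::nat. real n * exp (-2 * ln (real n))) \<longlongrightarrow> 0) at_top"
  by real_asymp+

theorem mainTheorem7:
  fixes rs :: "nat \<Rightarrow> int"
  assumes rs_max: "\<And>n r. qnr n r \<le> qnr n (rs n)"
  shows "(\<forall>\<epsilon>>0. \<forall>\<^sub>F n in at_top. \<forall>r::int.
            \<bar>real_of_int (r - rs n)\<bar> \<le> sqrt (real n * ln (real n)) \<longrightarrow>
            (let c = real_of_int (r - rs n) / sqrt (real n) in
              \<exists>\<delta>. \<bar>\<delta>\<bar> \<le> \<epsilon> \<and>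
                real (qnr n r) = exp (- (5 * sqrt 5 * c\<^sup>2 / 2) + \<delta>) * real (qnr n (rs n))))
       \<and> (\<lambda>n. real (card {A \<in> QP n. \<bar>real (card A) - real_of_int (rs n)\<bar> > sqrt (real n * ln (real n))}))
           \<in> O(\<lambda>n. real n * exp (- (5 * sqrt 5 / 2) * ln (real n)) * real (qnr n (rs n)))
       \<and> (\<lambda>n. real (card {A \<in> QP n. \<bar>real (card A) - real_of_int (rs n)\<bar> > sqrt (real n * ln (real n))}))
           \<in> o(\<lambda>n. real (qnr n (rs n)))"
proof -
  note EV = ev_facts
  have npos: "eventually (\<lambda>n::nat. real n > 0) at_top"
    using eventually_gt_at_top[of "0::nat"] by eventually_elim simp
  have ka5: "ka / 2 = 5 * sqrt 5 / 2" unfolding ka_def by simp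
  have P1: "\<forall>\<epsilon>>0. \<forall>\<^sub>F n in at_top. \<forall>r::int.
            \<bar>real_of_int (r - rs n)\<bar> \<le> sqrt (real n * ln (real n)) \<longrightarrow>
            (let c = real_of_int (r - rs n) / sqrt (real n) in
              \<exists>\<delta>. \<bar>\<delta>\<bar> \<le> \<epsilon> \<and>
                real (qnr n r) = exp (- (5 * sqrt 5 * c\<^sup>2 / 2) + \<delta>) * real (qnr n (rs n)))"
  proof (intro allI impI)
    fix \<epsilon> :: real assume e: "\<epsilon> > 0"
    note e2 = order_tendstoD(2)[OF EV(4) e]
    show "\<forall>\<^sub>F n in at_top. \<forall>r::int.
            \<bar>real_of_int (r - rs n)\<bar> \<le> sqrt (real n * ln (real n)) \<longrightarrow>
            (let c = real_of_int (r - rs n) / sqrt (real n) in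
              \<exists>\<delta>. \<bar>\<delta>\<bar> \<le> \<epsilon> \<and>
                real (qnr n r) = exp (- (5 * sqrt 5 * c\<^sup>2 / 2) + \<delta>) * real (qnr n (rs n)))"
      using EV(1) e2 npos
    proof eventually_elim
      case (elim n)
      define K where "K = sqrt (real n * ln (real n))"
      show ?case
      proof (intro allI impI)
        fix r :: int assume r: "\<bar>real_of_int (r - rs n)\<bar> \<le> sqrt (real n * ln (real n))"
        have "0 < n" using elim(3) by simp
        then have "1 \<le> real n" by simp
        then have "0 \<le> ln (real n)" by simp
        then have K0: "0 \<le> K" unfolding K_def by simp
        note P = part1_fixed[OF rs_max elim(3) K0 elim(1)[folded K_def] r[folded K_def]]
        define k where "k = real_of_int (r - rs n)"
        define \<delta> where "\<delta> = ln (real (qnr n r)) - ln (real (qnr n (rs n))) + ka * k^2 / (2*real n)"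
        have qR: "qnr n (rs n) > 0" using rstar[OF rs_max] by simp
        have d: "\<bar>\<delta>\<bar> \<le> \<epsilon>" using P(2) elim(2) unfolding \<delta>_def k_def K_def by linarith
        have c2: "5 * sqrt 5 * (k / sqrt (real n))^2 / 2 = ka * k^2 / (2*real n)"
          unfolding ka_def using elim(3) by (simp add: power_divide)
        have "exp (- (5 * sqrt 5 * (k / sqrt (real n))^2 / 2) + \<delta>) * real (qnr n (rs n))
            = exp (ln (real (qnr n r)) - ln (real (qnr n (rs n)))) * real (qnr n (rs n))"
          unfolding c2 \<delta>_def by simp
        also have "\<dots> = real (qnr n r)" using P(1) qR by (simp add: exp_diff)
        finally show "let c = real_of_int (r - rs n) / sqrt (real n) in
              \<exists>\<delta>. \<bar>\<delta>\<bar> \<le> \<epsilon> \<and>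
                real (qnr n r) = exp (- (5 * sqrt 5 * c\<^sup>2 / 2) + \<delta>) * real (qnr n (rs n))"
          unfolding Let_def k_def[symmetric] using d by metis
      qed
    qed
  qed
  define F where "F = (\<lambda>n. real (card {A \<in> QP n. \<bar>real (card A) - real_of_int (rs n)\<bar> > sqrt (real n * ln (real n))}))"
  define H where "H = (\<lambda>n::nat. real n * exp (- (5 * sqrt 5 / 2) * ln (real n)))"
  have main: "eventually (\<lambda>n. F n \<le> 2 * exp 2 * (H n * real (qnr n (rs n)))) at_top"
    using EV(1) EV(2) EV(3) order_tendstoD(2)[OF EV(4) zero_less_one] npos
  proof eventually_elim
    case (elim n)
    define K where "K = sqrt (real n * ln (real n))"
    have "0 < n" using elim(5) by simp
    then have n1: "1 \<le> real n" by simp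
    have B: "K * (3/real n + 200*(K+2)^2/(real n)^2) + 12*K/real n \<le> 1" using elim(4) unfolding K_def by simp
    note C = count_bound[OF rs_max elim(5) elim(2)[folded K_def] elim(1)[folded K_def] B elim(3)[folded K_def]]
    have lnn: "0 \<le> ln (real n)" using n1 by simp
    have KK: "K^2 = real n * ln (real n)" unfolding K_def using lnn by simp
    have "ka*K^2/(2*real n) = (5 * sqrt 5 / 2) * ln (real n)" unfolding KK ka_def using elim(5) by (simp add: field_simps)
    then have ex: "exp (2 - ka*K^2/(2*real n)) = exp 2 * exp (- (5 * sqrt 5 / 2) * ln (real n))"
      by (simp add: exp_diff exp_minus field_simps)
    have "F n \<le> (real n + 1) * (exp 2 * exp (- (5 * sqrt 5 / 2) * ln (real n)) * real (qnr n (rs n)))"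
      using C unfolding F_def K_def[symmetric] ex .
    also have "\<dots> \<le> (2 * real n) * (exp 2 * exp (- (5 * sqrt 5 / 2) * ln (real n)) * real (qnr n (rs n)))"
      using n1 by (intro mult_right_mono) auto
    also have "\<dots> = 2 * exp 2 * (H n * real (qnr n (rs n)))" unfolding H_def by simp
    finally show ?case .
  qed
  have Fpos: "\<And>n. 0 \<le> F n" unfolding F_def by simp
  have Hpos: "\<And>n. 0 \<le> H n" unfolding H_def by simp
  have P2: "F \<in> O(\<lambda>n. H n * real (qnr n (rs n)))"
  proof (rule bigoI)
    show "\<forall>\<^sub>F x in at_top. norm (F x) \<le> (2 * exp 2) * norm (H x * real (qnr x (rs x)))"
      using main by eventually_elim (simp add: Fpos Hpos abs_mult)
  qed
  have Hlim: "(H \<longlongrightarrow> 0) at_top"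
  proof (rule tendsto_sandwich[OF _ _ tendsto_const EV(5)])
    show "\<forall>\<^sub>F n in at_top. 0 \<le> H n" by (simp add: Hpos)
    show "\<forall>\<^sub>F n in at_top. H n \<le> real n * exp (-2 * ln (real n))"
      using npos
    proof eventually_elim
      case (elim n)
      then have "0 < n" by simp
      then have "0 \<le> ln (real n)" by simp
      moreover have "2 \<le> 5 * sqrt 5 / 2" using s5 by simp
      ultimately have "2 * ln (real n) \<le> (5 * sqrt 5 / 2) * ln (real n)" by (intro mult_right_mono) auto
      then show ?case unfolding H_def by (intro mult_left_mono) auto
    qed
  qed
  have P3: "F \<in> o(\<lambda>n. real (qnr n (rs n)))"
  proof (rule landau_o.smallI)
    fix c :: real assume c: "c > 0"
    have "eventually (\<lambda>n. H n < c / (2 * exp 2)) at_top"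
      using order_tendstoD(2)[OF Hlim] c by simp
    then show "\<forall>\<^sub>F x in at_top. norm (F x) \<le> c * norm (real (qnr x (rs x)))"
      using main
    proof eventually_elim
      case (elim n)
      have "F n \<le> 2 * exp 2 * (H n * real (qnr n (rs n)))" using elim(2) .
      also have "\<dots> \<le> 2 * exp 2 * ((c / (2 * exp 2)) * real (qnr n (rs n)))"
        using elim(1) by (intro mult_left_mono mult_right_mono) auto
      also have "\<dots> = c * real (qnr n (rs n))" by simp
      finally show ?case using Fpos by simp
    qed
  qed
  show ?thesis using P1 P2 P3 unfolding F_def H_def by (simp add: mult.assoc)
qed

end
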